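(* Let $\mathbb{Q}\subset K$ be a totally imaginary Galois extension of finite degree. Then $\overline{N}_{K/\mathbb{Q}}=\mathbb{Q}^+$.
   Context: $\overline{N}_{K/\mathbb{Q}}$ is the set of all finite sums $\sum_iN_{K/\mathbb{Q}}(a_i)$ with $a_i\in K$ and $N_{K/\mathbb{Q}}$ the field norm; $\mathbb{Q}^+$ denotes the non-negative rationals. A number field is totally imaginary if none of its embeddings into $\mathbb{C}$ lands in $\mathbb{R}$. *)

theory Defs
  imports Complex_Main
begin

definition subfield_C :: "complex set \<Rightarrow> bool" where
  "subfield_C K \<longleftrightarrow> 0 \<in> K \<and> 1 \<in> K \<and>
     (\<forall>x\<in>K. \<forall>y\<in>K. x + y \<in> K \<and> x * y \<in> K) \<and>
     (\<forall>x\<in>K. - x \<in> K \<and> inverse x \<in> K)"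

definition finite_degree_over_Q :: "complex set \<Rightarrow> bool" where
  "finite_degree_over_Q K \<longleftrightarrow>
     (\<exists>B. finite B \<and> B \<subseteq> K \<and>
        (\<forall>x\<in>K. \<exists>c :: complex \<Rightarrow> rat. x = (\<Sum>b\<in>B. of_rat (c b) * b)))"

definition number_field :: "complex set \<Rightarrow> bool" where
  "number_field K \<longleftrightarrow> subfield_C K \<and> finite_degree_over_Q K"

text \<open>Field embeddings K \<rightarrow> C (ring homomorphisms, unital), normalised to 0
outside K so that distinct embeddings are distinct functions.\<close>
definition embeddings :: "complex set \<Rightarrow> (complex \<Rightarrow> complex) set" where
  "embeddings K = {\<sigma>.
     (\<forall>x\<in>K. \<forall>y\<in>K. \<sigma> (x + y) = \<sigma> x + \<sigma> y \<and> \<sigma> (x * y) = \<sigma> x * \<sigma> y) \<and>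
     \<sigma> 1 = 1 \<and> (\<forall>x. x \<notin> K \<longrightarrow> \<sigma> x = 0)}"

text \<open>K/Q Galois: every embedding of K into C maps K into K (normality;
separability is automatic in characteristic 0).\<close>
definition galois_over_Q :: "complex set \<Rightarrow> bool" where
  "galois_over_Q K \<longleftrightarrow> (\<forall>\<sigma>\<in>embeddings K. \<sigma> ` K \<subseteq> K)"

definition totally_imaginary :: "complex set \<Rightarrow> bool" where
  "totally_imaginary K \<longleftrightarrow> (\<forall>\<sigma>\<in>embeddings K. \<not> (\<sigma> ` K \<subseteq> \<real>))"

definition field_norm_Q :: "complex set \<Rightarrow> complex \<Rightarrow> complex" where
  "field_norm_Q K a = (\<Prod>\<sigma>\<in>embeddings K. \<sigma> a)"

definition sums_of_norms :: "complex set \<Rightarrow> complex set" where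
  "sums_of_norms K = {sum_list (map (field_norm_Q K) as) | as. set as \<subseteq> K}"

end

theory Submission
  imports Defs "HOL-Computational_Algebra.Fundamental_Theorem_Algebra" "HOL-Library.FuncSet"
begin

definition polyin :: "complex set \<Rightarrow> complex poly \<Rightarrow> bool" where
  "polyin E f \<longleftrightarrow> (\<forall>i. coeff f i \<in> E)"

definition hom_on :: "complex set \<Rightarrow> (complex \<Rightarrow> complex) \<Rightarrow> bool" where
  "hom_on E t \<longleftrightarrow> (\<forall>x\<in>E. \<forall>y\<in>E. t (x + y) = t x + t y \<and> t (x * y) = t x * t y) \<and> t 1 = 1"

definition adjoin :: "complex set \<Rightarrow> complex \<Rightarrow> complex set" where
  "adjoin E b = {poly f b | f. polyin E f}"

lemma sf_0: "subfield_C E \<Longrightarrow> 0 \<in> E" by (simp add: subfield_C_def)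
lemma sf_1: "subfield_C E \<Longrightarrow> 1 \<in> E" by (simp add: subfield_C_def)
lemma sf_add: "subfield_C E \<Longrightarrow> x \<in> E \<Longrightarrow> y \<in> E \<Longrightarrow> x + y \<in> E" by (simp add: subfield_C_def)
lemma sf_mult: "subfield_C E \<Longrightarrow> x \<in> E \<Longrightarrow> y \<in> E \<Longrightarrow> x * y \<in> E" by (simp add: subfield_C_def)
lemma sf_uminus: "subfield_C E \<Longrightarrow> x \<in> E \<Longrightarrow> - x \<in> E" by (simp add: subfield_C_def)
lemma sf_inverse: "subfield_C E \<Longrightarrow> x \<in> E \<Longrightarrow> inverse x \<in> E" by (simp add: subfield_C_def)
lemma sf_diff: "subfield_C E \<Longrightarrow> x \<in> E \<Longrightarrow> y \<in> E \<Longrightarrow> x - y \<in> E"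
  using sf_add sf_uminus by (metis diff_conv_add_uminus)
lemma sf_divide: "subfield_C E \<Longrightarrow> x \<in> E \<Longrightarrow> y \<in> E \<Longrightarrow> x / y \<in> E"
  using sf_mult sf_inverse by (metis divide_inverse)

lemma sf_sum: "subfield_C E \<Longrightarrow> (\<And>i. i \<in> A \<Longrightarrow> f i \<in> E) \<Longrightarrow> sum f A \<in> E"
  by (induction A rule: infinite_finite_induct) (auto intro: sf_0 sf_add)
lemma sf_prod: "subfield_C E \<Longrightarrow> (\<And>i. i \<in> A \<Longrightarrow> f i \<in> E) \<Longrightarrow> prod f A \<in> E"
  by (induction A rule: infinite_finite_induct) (auto intro: sf_1 sf_mult)
lemma sf_power: "subfield_C E \<Longrightarrow> x \<in> E \<Longrightarrow> x ^ n \<in> E"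
  by (induction n) (auto intro: sf_1 sf_mult)

lemma sf_of_nat: "subfield_C E \<Longrightarrow> of_nat n \<in> E"
  by (induction n) (auto intro: sf_0 sf_1 sf_add)
lemma sf_of_int: "subfield_C E \<Longrightarrow> of_int n \<in> E"
proof (cases "n \<ge> 0")
  case True assume "subfield_C E"
  then show ?thesis using True sf_of_nat[of E "nat n"] by simp
next
  case False assume "subfield_C E"
  then have "- of_nat (nat (-n)) \<in> E" using sf_of_nat sf_uminus by blast
  then show ?thesis using False by simp
qed
lemma sf_Rats: "subfield_C E \<Longrightarrow> \<rat> \<subseteq> E"
proof
  fix x :: complex assume "subfield_C E" "x \<in> \<rat>"
  then obtain a b where "x = of_int a / of_int b" by (auto elim: Rats_cases')
  then show "x \<in> E" using \<open>subfield_C E\<close> by (simp add: sf_divide sf_of_int)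
qed
lemma sf_of_rat: "subfield_C E \<Longrightarrow> of_rat r \<in> E" using sf_Rats Rats_of_rat by blast

lemma subfield_Rats: "subfield_C \<rat>"
  by (simp add: subfield_C_def)

lemma hom_0: "hom_on E t \<Longrightarrow> 0 \<in> E \<Longrightarrow> t 0 = 0"
proof -
  assume "hom_on E t" "0 \<in> E"
  then have "t (0 + 0) = t 0 + t 0" unfolding hom_on_def by blast
  then show ?thesis by simp
qed
lemma hom_add: "hom_on E t \<Longrightarrow> x \<in> E \<Longrightarrow> y \<in> E \<Longrightarrow> t (x + y) = t x + t y"
  unfolding hom_on_def by blast
lemma hom_mult: "hom_on E t \<Longrightarrow> x \<in> E \<Longrightarrow> y \<in> E \<Longrightarrow> t (x * y) = t x * t y"
  unfolding hom_on_def by blast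
lemma hom_1: "hom_on E t \<Longrightarrow> t 1 = 1"
  unfolding hom_on_def by blast
lemma hom_uminus: "hom_on E t \<Longrightarrow> subfield_C E \<Longrightarrow> x \<in> E \<Longrightarrow> t (- x) = - t x"
proof -
  assume h: "hom_on E t" "subfield_C E" "x \<in> E"
  have "t (x + - x) = t x + t (- x)" using hom_add[OF h(1) h(3) sf_uminus[OF h(2) h(3)]] .
  then have "t x + t (- x) = 0" using hom_0[OF h(1) sf_0[OF h(2)]] by simp
  then show ?thesis by (simp add: add_eq_0_iff)
qed
lemma hom_inverse: "hom_on E t \<Longrightarrow> subfield_C E \<Longrightarrow> x \<in> E \<Longrightarrow> t (inverse x) = inverse (t x)"
proof (cases "x = 0")
  case True
  assume "hom_on E t" "subfield_C E"
  then show ?thesis using True hom_0[of E t] sf_0[of E] by simp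
next
  case False
  assume h: "hom_on E t" "subfield_C E" "x \<in> E"
  then have "t x * t (inverse x) = 1" using hom_mult[OF h(1) h(3) sf_inverse[OF h(2) h(3)]] hom_1[OF h(1)] False
    by simp
  then show ?thesis by (metis inverse_unique)
qed
lemma hom_diff: "hom_on E t \<Longrightarrow> subfield_C E \<Longrightarrow> x \<in> E \<Longrightarrow> y \<in> E \<Longrightarrow> t (x - y) = t x - t y"
proof -
  assume h: "hom_on E t" "subfield_C E" "x \<in> E" "y \<in> E"
  have "t (x + - y) = t x + t (- y)" using hom_add[OF h(1) h(3) sf_uminus[OF h(2) h(4)]] .
  then show ?thesis using hom_uminus[OF h(1) h(2) h(4)] by simp
qed
lemma hom_nonzero: "hom_on E t \<Longrightarrow> subfield_C E \<Longrightarrow> x \<in> E \<Longrightarrow> x \<noteq> 0 \<Longrightarrow> t x \<noteq> 0"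
  using hom_mult[of E t x "inverse x"] hom_1[of E t] sf_inverse[of E x] by auto
lemma hom_inj: "hom_on E t \<Longrightarrow> subfield_C E \<Longrightarrow> x \<in> E \<Longrightarrow> y \<in> E \<Longrightarrow> t x = t y \<Longrightarrow> x = y"
proof -
  assume h: "hom_on E t" "subfield_C E" "x \<in> E" "y \<in> E" "t x = t y"
  have "t (x + - y) = t x + t (- y)" using hom_add[OF h(1) h(3) sf_uminus[OF h(2) h(4)]] .
  then have "t (x + - y) = 0" using hom_uminus[OF h(1) h(2) h(4)] h(5) by simp
  then have "x + - y = 0" using hom_nonzero[OF h(1) h(2)] sf_add[OF h(2) h(3) sf_uminus[OF h(2) h(4)]] by blast
  then show ?thesis by (simp add: add_eq_0_iff)
qed
lemma hom_of_nat: "hom_on E t \<Longrightarrow> subfield_C E \<Longrightarrow> t (of_nat n) = of_nat n"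
  by (induction n) (auto simp: hom_0 sf_0 hom_1 hom_add sf_1 sf_of_nat)
lemma hom_of_int: "hom_on E t \<Longrightarrow> subfield_C E \<Longrightarrow> t (of_int n) = of_int n"
proof (cases "n \<ge> 0")
  case True assume "hom_on E t" "subfield_C E"
  then show ?thesis using True hom_of_nat[of E t "nat n"] by simp
next
  case False assume h: "hom_on E t" "subfield_C E"
  then have "t (- of_nat (nat (-n))) = - of_nat (nat (-n))" using hom_of_nat hom_uminus sf_of_nat by metis
  then show ?thesis using False by simp
qed
lemma hom_Rats: "hom_on E t \<Longrightarrow> subfield_C E \<Longrightarrow> x \<in> \<rat> \<Longrightarrow> t x = x"
proof -
  assume h: "hom_on E t" "subfield_C E" "x \<in> \<rat>"
  then obtain a b where "x = of_int a / of_int b" by (auto elim: Rats_cases')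
  then show ?thesis using h
    by (simp add: divide_inverse hom_mult hom_inverse hom_of_int sf_of_int sf_inverse)
qed
lemma hom_sum: "hom_on E t \<Longrightarrow> subfield_C E \<Longrightarrow> (\<And>i. i \<in> A \<Longrightarrow> f i \<in> E) \<Longrightarrow> t (sum f A) = (\<Sum>i\<in>A. t (f i))"
  by (induction A rule: infinite_finite_induct) (auto simp: hom_0 sf_0 hom_add sf_sum)
lemma hom_prod: "hom_on E t \<Longrightarrow> subfield_C E \<Longrightarrow> (\<And>i. i \<in> A \<Longrightarrow> f i \<in> E) \<Longrightarrow> t (prod f A) = (\<Prod>i\<in>A. t (f i))"
  by (induction A rule: infinite_finite_induct) (auto simp: hom_1 hom_mult sf_prod)

lemma polyin_mono: "polyin A f \<Longrightarrow> A \<subseteq> B \<Longrightarrow> polyin B f"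
  unfolding polyin_def by auto
lemma polyin_0[simp]: "subfield_C E \<Longrightarrow> polyin E 0" by (simp add: polyin_def sf_0)
lemma polyin_pCons: "subfield_C E \<Longrightarrow> polyin E (pCons a f) \<longleftrightarrow> a \<in> E \<and> polyin E f"
  unfolding polyin_def by (auto simp: coeff_pCons split: nat.splits)
lemma polyin_const: "subfield_C E \<Longrightarrow> a \<in> E \<Longrightarrow> polyin E [:a:]"
  by (simp add: polyin_pCons)
lemma polyin_add: "subfield_C E \<Longrightarrow> polyin E f \<Longrightarrow> polyin E g \<Longrightarrow> polyin E (f + g)"
  unfolding polyin_def by (simp add: sf_add)
lemma polyin_uminus: "subfield_C E \<Longrightarrow> polyin E f \<Longrightarrow> polyin E (- f)"
  unfolding polyin_def by (simp add: sf_uminus)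
lemma polyin_diff: "subfield_C E \<Longrightarrow> polyin E f \<Longrightarrow> polyin E g \<Longrightarrow> polyin E (f - g)"
  unfolding polyin_def by (simp add: sf_diff)
lemma polyin_mult: "subfield_C E \<Longrightarrow> polyin E f \<Longrightarrow> polyin E g \<Longrightarrow> polyin E (f * g)"
  unfolding polyin_def by (simp add: coeff_mult sf_sum sf_mult)
lemma polyin_monom: "subfield_C E \<Longrightarrow> a \<in> E \<Longrightarrow> polyin E (monom a k)"
  unfolding polyin_def by (simp add: coeff_monom sf_0)
lemma polyin_smult: "subfield_C E \<Longrightarrow> a \<in> E \<Longrightarrow> polyin E f \<Longrightarrow> polyin E (smult a f)"
  unfolding polyin_def by (simp add: sf_mult)
lemma polyin_pderiv: "subfield_C E \<Longrightarrow> polyin E f \<Longrightarrow> polyin E (pderiv f)"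
  unfolding polyin_def by (simp add: coeff_pderiv sf_mult sf_of_nat sf_add sf_1)
lemma poly_in: "subfield_C E \<Longrightarrow> polyin E f \<Longrightarrow> x \<in> E \<Longrightarrow> poly f x \<in> E"
  by (induction f) (auto simp: polyin_pCons sf_add sf_mult sf_0)

lemma coeff_map_hom: "hom_on E t \<Longrightarrow> subfield_C E \<Longrightarrow> coeff (map_poly t f) n = t (coeff f n)"
  by (rule coeff_map_poly) (simp add: hom_0 sf_0)

lemma map_hom_add: "hom_on E t \<Longrightarrow> subfield_C E \<Longrightarrow> polyin E f \<Longrightarrow> polyin E g \<Longrightarrow>
  map_poly t (f + g) = map_poly t f + map_poly t g"
  by (rule poly_eqI) (simp add: coeff_map_hom hom_add polyin_def)
lemma map_hom_mult: "hom_on E t \<Longrightarrow> subfield_C E \<Longrightarrow> polyin E f \<Longrightarrow> polyin E g \<Longrightarrow>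
  map_poly t (f * g) = map_poly t f * map_poly t g"
proof (rule poly_eqI)
  fix n
  assume h: "hom_on E t" "subfield_C E" "polyin E f" "polyin E g"
  have "coeff (map_poly t (f * g)) n = t (\<Sum>i\<le>n. coeff f i * coeff g (n - i))"
    using coeff_map_hom[OF h(1,2)] coeff_mult by metis
  also have "\<dots> = (\<Sum>i\<le>n. t (coeff f i * coeff g (n - i)))"
    by (rule hom_sum[OF h(1,2)]) (use h(2-4) sf_mult in \<open>auto simp: polyin_def\<close>)
  also have "\<dots> = (\<Sum>i\<le>n. t (coeff f i) * t (coeff g (n - i)))"
    by (rule sum.cong) (use h hom_mult in \<open>auto simp: polyin_def\<close>)
  also have "\<dots> = coeff (map_poly t f * map_poly t g) n"
    by (simp add: coeff_mult coeff_map_hom[OF h(1,2)])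
  finally show "coeff (map_poly t (f * g)) n = coeff (map_poly t f * map_poly t g) n" .
qed
lemma map_hom_diff: "hom_on E t \<Longrightarrow> subfield_C E \<Longrightarrow> polyin E f \<Longrightarrow> polyin E g \<Longrightarrow>
  map_poly t (f - g) = map_poly t f - map_poly t g"
  by (rule poly_eqI) (simp add: coeff_map_hom hom_diff polyin_def)
lemma map_hom_const: "hom_on E t \<Longrightarrow> subfield_C E \<Longrightarrow> map_poly t [:a:] = [:t a:]"
  by (rule poly_eqI) (simp add: coeff_map_hom coeff_pCons hom_0 sf_0 split: nat.splits)
lemma map_hom_X: "hom_on E t \<Longrightarrow> subfield_C E \<Longrightarrow> map_poly t [:0, 1:] = [:0, 1:]"
  by (rule poly_eqI) (simp add: coeff_map_hom coeff_pCons hom_0 sf_0 hom_1 split: nat.splits)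
lemma hom_poly: "hom_on E t \<Longrightarrow> subfield_C E \<Longrightarrow> polyin E f \<Longrightarrow> x \<in> E \<Longrightarrow>
   t (poly f x) = poly (map_poly t f) (t x)"
proof (induction f)
  case 0 then show ?case by (simp add: hom_0 sf_0)
next
  case (pCons a p)
  then show ?case
    by (simp add: map_poly_pCons hom_0 sf_0 polyin_pCons hom_add hom_mult poly_in sf_mult)
qed
lemma map_hom_Rats: "hom_on E t \<Longrightarrow> subfield_C E \<Longrightarrow> polyin \<rat> f \<Longrightarrow> map_poly t f = f"
  by (rule poly_eqI) (simp add: coeff_map_hom hom_Rats polyin_def)
lemma degree_map_hom: "hom_on E t \<Longrightarrow> subfield_C E \<Longrightarrow> polyin E f \<Longrightarrow> degree (map_poly t f) = degree f"
proof (cases "f = 0")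
  case True assume "hom_on E t" "subfield_C E" then show ?thesis using True by (simp)
next
  case False
  assume h: "hom_on E t" "subfield_C E" "polyin E f"
  have "coeff (map_poly t f) (degree f) \<noteq> 0"
    using h False by (simp add: coeff_map_hom hom_nonzero polyin_def)
  moreover have "degree (map_poly t f) \<le> degree f" by (rule map_poly_degree_leq)
  ultimately show ?thesis by (meson antisym le_degree)
qed


lemma poly_division:
  assumes E: "subfield_C E" and q: "polyin E q" "q \<noteq> 0"
  shows "polyin E f \<Longrightarrow> \<exists>s r. polyin E s \<and> polyin E r \<and> f = q * s + r \<and> (r = 0 \<or> degree r < degree q)"
proof (induction "degree f" arbitrary: f rule: less_induct)
  case less
  show ?case
  proof (cases "f = 0 \<or> degree f < degree q")
    case True
    then show ?thesis using less.prems E by (intro exI[of _ 0] exI[of _ f]) auto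
  next
    case False
    then have f0: "f \<noteq> 0" and dg: "degree q \<le> degree f" by auto
    define c where "c = lead_coeff f / lead_coeff q"
    define k where "k = degree f - degree q"
    define f' where "f' = f - q * monom c k"
    have lq: "lead_coeff q \<in> E" "lead_coeff f \<in> E" using q less.prems by (auto simp: polyin_def)
    have cE: "c \<in> E" unfolding c_def using lq E sf_divide by blast
    have c0: "c \<noteq> 0" using f0 q by (simp add: c_def)
    have pm: "polyin E (monom c k)" using E cE polyin_monom by blast
    have f'E: "polyin E f'" unfolding f'_def using E less.prems q pm polyin_diff polyin_mult by blast
    have dqm: "degree (q * monom c k) = degree f"
      using c0 q dg by (simp add: degree_mult_eq degree_monom_eq k_def)
    have "coeff (q * monom c k) (degree f) = lead_coeff q * c"
      using coeff_mult_degree_sum[of q "monom c k"] c0 dg by (simp add: degree_monom_eq k_def)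
    also have "\<dots> = lead_coeff f" using q by (simp add: c_def)
    finally have cf: "coeff f' (degree f) = 0" by (simp add: f'_def)
    show ?thesis
    proof (cases "f' = 0")
      case True
      then have "f = q * monom c k + 0" by (simp add: f'_def)
      then show ?thesis by (intro exI[of _ "monom c k"] exI[of _ 0]) (use pm E in auto)
    next
      case False
      have "degree f' \<le> degree f" unfolding f'_def using dqm
        by (metis degree_diff_le le_refl)
      moreover have "degree f' \<noteq> degree f" using cf False by (metis leading_coeff_0_iff)
      ultimately have "degree f' < degree f" by simp
      then obtain s r where sr: "polyin E s" "polyin E r" "f' = q * s + r" "r = 0 \<or> degree r < degree q"
        using less.hyps f'E by blast
      have "f = q * (s + monom c k) + r" using sr(3) by (simp add: f'_def algebra_simps)
      moreover have "polyin E (s + monom c k)" using E sr(1) pm polyin_add by blast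
      ultimately show ?thesis using sr by blast
    qed
  qed
qed

definition is_minpoly :: "complex set \<Rightarrow> complex \<Rightarrow> complex poly \<Rightarrow> bool" where
  "is_minpoly E b q \<longleftrightarrow> polyin E q \<and> q \<noteq> 0 \<and> poly q b = 0 \<and>
     (\<forall>f. polyin E f \<and> f \<noteq> 0 \<and> poly f b = 0 \<longrightarrow> degree q \<le> degree f)"

lemma ex_minpoly:
  assumes "polyin E p" "p \<noteq> 0" "poly p b = 0"
  shows "\<exists>q. is_minpoly E b q"
proof -
  have "\<exists>q. (polyin E q \<and> q \<noteq> 0 \<and> poly q b = 0) \<and>
     (\<forall>f. (polyin E f \<and> f \<noteq> 0 \<and> poly f b = 0) \<longrightarrow> degree q \<le> degree f)"
    by (rule ex_has_least_nat[of _ p]) (use assms in auto)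
  then show ?thesis unfolding is_minpoly_def by blast
qed

lemma minpoly_dvd:
  assumes E: "subfield_C E" and m: "is_minpoly E b q" and f: "polyin E f" "poly f b = 0"
  shows "\<exists>s. polyin E s \<and> f = q * s"
proof -
  obtain s r where sr: "polyin E s" "polyin E r" "f = q * s + r" "r = 0 \<or> degree r < degree q"
    using poly_division[OF E _ _ f(1)] m unfolding is_minpoly_def by blast
  have "poly r b = 0" using sr(3) f(2) m by (simp add: is_minpoly_def)
  then have "r = 0" using sr(2,4) m unfolding is_minpoly_def by force
  then show ?thesis using sr by auto
qed

lemma adjoin_add: "subfield_C E \<Longrightarrow> x \<in> adjoin E b \<Longrightarrow> y \<in> adjoin E b \<Longrightarrow> x + y \<in> adjoin E b"
proof -
  assume E: "subfield_C E" and "x \<in> adjoin E b" "y \<in> adjoin E b"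
  then obtain f g where "polyin E f" "polyin E g" "x = poly f b" "y = poly g b" unfolding adjoin_def by blast
  then have "x + y = poly (f + g) b" "polyin E (f + g)" using polyin_add[OF E] by auto
  then show ?thesis unfolding adjoin_def by blast
qed
lemma adjoin_mult: "subfield_C E \<Longrightarrow> x \<in> adjoin E b \<Longrightarrow> y \<in> adjoin E b \<Longrightarrow> x * y \<in> adjoin E b"
proof -
  assume E: "subfield_C E" and "x \<in> adjoin E b" "y \<in> adjoin E b"
  then obtain f g where "polyin E f" "polyin E g" "x = poly f b" "y = poly g b" unfolding adjoin_def by blast
  then have "x * y = poly (f * g) b" "polyin E (f * g)" using polyin_mult[OF E] by auto
  then show ?thesis unfolding adjoin_def by blast
qed
lemma adjoin_uminus: "subfield_C E \<Longrightarrow> x \<in> adjoin E b \<Longrightarrow> - x \<in> adjoin E b"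
proof -
  assume E: "subfield_C E" and "x \<in> adjoin E b"
  then obtain f where "polyin E f" "x = poly f b" unfolding adjoin_def by blast
  then have "- x = poly (- f) b" "polyin E (- f)" using polyin_uminus[OF E] by auto
  then show ?thesis unfolding adjoin_def by blast
qed
lemma adjoin_base: "subfield_C E \<Longrightarrow> x \<in> E \<Longrightarrow> x \<in> adjoin E b"
proof -
  assume E: "subfield_C E" and "x \<in> E"
  then have "x = poly [:x:] b" "polyin E [:x:]" using polyin_const[OF E] by auto
  then show ?thesis unfolding adjoin_def by blast
qed
lemma adjoin_gen: "subfield_C E \<Longrightarrow> b \<in> adjoin E b"
proof -
  assume E: "subfield_C E"
  have "polyin E [:0, 1:]" using E by (simp add: polyin_pCons sf_0 sf_1)
  moreover have "b = poly [:0, 1:] b" by simp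
  ultimately show ?thesis unfolding adjoin_def by blast
qed
lemma poly_in_adjoin: "subfield_C E \<Longrightarrow> polyin E g \<Longrightarrow> z \<in> adjoin E b \<Longrightarrow> poly g z \<in> adjoin E b"
  by (induction g) (auto simp: polyin_pCons intro: adjoin_add adjoin_mult adjoin_base sf_0)

lemma inv_poly:
  assumes "z \<noteq> 0"
  shows "polyin \<rat> p \<Longrightarrow> p \<noteq> 0 \<Longrightarrow> poly p z = 0 \<Longrightarrow> \<exists>g. polyin \<rat> g \<and> z * poly g z = 1"
proof (induction p)
  case 0 then show ?case by simp
next
  case (pCons a p)
  have Q: "subfield_C \<rat>" by (rule subfield_Rats)
  show ?case
  proof (cases "a = 0")
    case True
    then have "p \<noteq> 0" using pCons by auto
    moreover have "poly p z = 0" using pCons.prems True assms by simp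
    moreover have "polyin \<rat> p" using pCons.prems Q by (simp add: polyin_pCons)
    ultimately show ?thesis using pCons.IH by blast
  next
    case False
    have aQ: "a \<in> \<rat>" "polyin \<rat> p" using pCons.prems Q by (auto simp: polyin_pCons)
    have "a + z * poly p z = 0" using pCons.prems by simp
    then have "z * poly (smult (- 1 / a) p) z = 1" using False
      by (simp add: field_simps) (metis add.commute add_eq_0_iff mult.commute)
    moreover have "polyin \<rat> (smult (- 1 / a) p)" using aQ Q by (intro polyin_smult) auto
    ultimately show ?thesis by blast
  qed
qed

definition algQ :: "complex \<Rightarrow> bool" where
  "algQ z \<longleftrightarrow> (\<exists>p. polyin \<rat> p \<and> p \<noteq> 0 \<and> poly p z = 0)"

lemma adjoin_subfield:
  assumes E: "subfield_C E" and alg: "\<And>z. z \<in> adjoin E b \<Longrightarrow> algQ z"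
  shows "subfield_C (adjoin E b)"
  unfolding subfield_C_def
proof (intro conjI ballI)
  show "0 \<in> adjoin E b" "1 \<in> adjoin E b" using E by (auto intro: adjoin_base sf_0 sf_1)
next
  fix x y assume "x \<in> adjoin E b" "y \<in> adjoin E b"
  then show "x + y \<in> adjoin E b" "x * y \<in> adjoin E b" using E adjoin_add adjoin_mult by auto
next
  fix x assume x: "x \<in> adjoin E b"
  then show "- x \<in> adjoin E b" using E adjoin_uminus by auto
  show "inverse x \<in> adjoin E b"
  proof (cases "x = 0")
    case True then show ?thesis using E by (auto intro: adjoin_base sf_0)
  next
    case False
    obtain p where "polyin \<rat> p" "p \<noteq> 0" "poly p x = 0" using alg[OF x] by (auto simp: algQ_def)
    then obtain g where g: "polyin \<rat> g" "x * poly g x = 1" using inv_poly[OF False] by blast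
    then have "inverse x = poly g x" by (metis inverse_unique)
    moreover have "polyin E g" using g(1) sf_Rats[OF E] polyin_mono by blast
    ultimately show ?thesis using poly_in_adjoin[OF E _ x] by simp
  qed
qed

lemma adjoin_subset: "subfield_C K \<Longrightarrow> E \<subseteq> K \<Longrightarrow> b \<in> K \<Longrightarrow> adjoin E b \<subseteq> K"
  unfolding adjoin_def using poly_in polyin_mono by blast

lemma extend:
  assumes E: "subfield_C E" and t: "hom_on E t" and m: "is_minpoly E b q"
    and y: "poly (map_poly t q) y = 0"
  shows "\<exists>t'. hom_on (adjoin E b) t' \<and> (\<forall>x\<in>E. t' x = t x) \<and> t' b = y"
proof -
  have key: "poly (map_poly t f) y = 0" if f: "polyin E f" "poly f b = 0" for f
  proof -
    obtain s where s: "polyin E s" "f = q * s" using minpoly_dvd[OF E m f] by blast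
    have "map_poly t f = map_poly t q * map_poly t s"
      using s m map_hom_mult[OF t E] unfolding is_minpoly_def by blast
    then show ?thesis using y by simp
  qed
  have wd: "poly (map_poly t f) y = poly (map_poly t g) y"
    if "polyin E f" "polyin E g" "poly f b = poly g b" for f g
  proof -
    have "poly (map_poly t (f - g)) y = 0"
      using key[of "f - g"] that polyin_diff[OF E] by simp
    then show ?thesis using map_hom_diff[OF t E that(1,2)] by simp
  qed
  define t' where "t' z = poly (map_poly t (SOME f. polyin E f \<and> poly f b = z)) y" for z
  have t'eq: "t' (poly f b) = poly (map_poly t f) y" if "polyin E f" for f
  proof -
    have ex: "\<exists>g. polyin E g \<and> poly g b = poly f b" using that by blast
    have "polyin E (SOME g. polyin E g \<and> poly g b = poly f b) \<and>
          poly (SOME g. polyin E g \<and> poly g b = poly f b) b = poly f b"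
      by (rule someI_ex[OF ex])
    then show ?thesis unfolding t'_def using wd that by blast
  qed
  have "hom_on (adjoin E b) t'"
    unfolding hom_on_def
  proof (intro conjI ballI)
    fix x z assume "x \<in> adjoin E b" "z \<in> adjoin E b"
    then obtain f g where fg: "polyin E f" "polyin E g" "x = poly f b" "z = poly g b"
      unfolding adjoin_def by blast
    have "t' (x + z) = t' (poly (f + g) b)" using fg by simp
    also have "\<dots> = poly (map_poly t (f + g)) y" using t'eq polyin_add[OF E fg(1,2)] by blast
    also have "\<dots> = t' x + t' z" using map_hom_add[OF t E fg(1,2)] t'eq fg by simp
    finally show "t' (x + z) = t' x + t' z" .
    have "t' (x * z) = t' (poly (f * g) b)" using fg by simp
    also have "\<dots> = poly (map_poly t (f * g)) y" using t'eq polyin_mult[OF E fg(1,2)] by blast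
    also have "\<dots> = t' x * t' z" using map_hom_mult[OF t E fg(1,2)] t'eq fg by simp
    finally show "t' (x * z) = t' x * t' z" .
  next
    have "t' 1 = t' (poly [:1:] b)" by simp
    also have "\<dots> = poly (map_poly t [:1:]) y" using t'eq polyin_const[OF E sf_1[OF E]] by blast
    also have "\<dots> = 1" using map_hom_const[OF t E] hom_1[OF t] by simp
    finally show "t' 1 = 1" .
  qed
  moreover have "\<forall>x\<in>E. t' x = t x"
  proof
    fix x assume x: "x \<in> E"
    have "t' x = t' (poly [:x:] b)" by simp
    also have "\<dots> = poly (map_poly t [:x:]) y" using t'eq polyin_const[OF E x] by blast
    also have "\<dots> = t x" using map_hom_const[OF t E] by simp
    finally show "t' x = t x" .
  qed
  moreover have "t' b = y"
  proof -
    have pX: "polyin E [:0, 1:]" using E by (simp add: polyin_pCons sf_0 sf_1)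
    have "t' b = t' (poly [:0, 1:] b)" by simp
    also have "\<dots> = poly (map_poly t [:0, 1:]) y" using t'eq pX by blast
    also have "\<dots> = y" using map_hom_X[OF t E] by simp
    finally show ?thesis .
  qed
  ultimately show ?thesis by blast
qed


interpretation Qvs: vector_space "\<lambda>(r::rat) (z::complex). of_rat r * z"
  by unfold_locales (auto simp: algebra_simps of_rat_add of_rat_mult)

lemma polyin_sum: "subfield_C E \<Longrightarrow> (\<And>i. i \<in> A \<Longrightarrow> polyin E (f i)) \<Longrightarrow> polyin E (sum f A)"
  by (induction A rule: infinite_finite_induct) (auto intro: polyin_add)

lemma span_K:
  assumes "finite_degree_over_Q K"
  obtains B where "finite B" "B \<subseteq> K" "K \<subseteq> Qvs.span B"
    "\<forall>x\<in>K. \<exists>c :: complex \<Rightarrow> rat. x = (\<Sum>b\<in>B. of_rat (c b) * b)"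
proof -
  obtain B where B: "finite B" "B \<subseteq> K" "\<forall>x\<in>K. \<exists>c :: complex \<Rightarrow> rat. x = (\<Sum>b\<in>B. of_rat (c b) * b)"
    using assms unfolding finite_degree_over_Q_def by blast
  have "K \<subseteq> Qvs.span B"
  proof
    fix x assume "x \<in> K"
    then obtain c where "x = (\<Sum>b\<in>B. of_rat (c b) * b)" using B by blast
    have "of_rat (c b) * b \<in> Qvs.span B" if "b \<in> B" for b
      using Qvs.span_scale[OF Qvs.span_base[OF that], of "c b"] by simp
    then show "x \<in> Qvs.span B" unfolding \<open>x = _\<close> by (rule Qvs.span_sum)
  qed
  then show ?thesis using that B by blast
qed

lemma algQ_K:
  assumes K: "number_field K" and y: "y \<in> K"
  shows "algQ y"
proof -
  have sf: "subfield_C K" and fd: "finite_degree_over_Q K" using K by (auto simp: number_field_def)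
  obtain B where B: "finite B" "B \<subseteq> K" "K \<subseteq> Qvs.span B"
     "\<forall>x\<in>K. \<exists>c :: complex \<Rightarrow> rat. x = (\<Sum>b\<in>B. of_rat (c b) * b)" by (rule span_K[OF fd])
  define N where "N = card B"
  have Q: "subfield_C \<rat>" by (rule subfield_Rats)
  show ?thesis
  proof (cases "inj_on (\<lambda>i. y ^ i) {..N}")
    case False
    then obtain i j where ij: "i \<noteq> j" "y ^ i = y ^ j" unfolding inj_on_def by blast
    define p where "p = monom (1::complex) j - monom 1 i"
    have "coeff p j = 1" using ij by (simp add: p_def coeff_monom)
    then have "p \<noteq> 0" by auto
    moreover have "poly p y = 0" using ij by (simp add: p_def poly_monom)
    moreover have "polyin \<rat> p" unfolding p_def using Q by (intro polyin_diff polyin_monom) auto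
    ultimately show ?thesis unfolding algQ_def by blast
  next
    case True
    define S where "S = (\<lambda>i. y ^ i) ` {..N}"
    have cS: "card S = Suc N" using True by (simp add: S_def card_image)
    have "S \<subseteq> K" unfolding S_def using sf y sf_power by blast
    then have Ssub: "S \<subseteq> Qvs.span B" using B by blast
    have "Qvs.dependent S"
    proof (rule ccontr)
      assume "\<not> Qvs.dependent S"
      then have "card S \<le> card B" using Qvs.independent_span_bound[OF B(1) _ Ssub] by blast
      then show False using cS N_def by simp
    qed
    then obtain t u where tu: "finite t" "t \<subseteq> S" "(\<Sum>v\<in>t. of_rat (u v) * v) = 0" "\<exists>v\<in>t. u v \<noteq> 0"
      unfolding Qvs.dependent_explicit by blast
    define I where "I = {i \<in> {..N}. y ^ i \<in> t}"
    have injI: "inj_on (\<lambda>i. y ^ i) I" using True unfolding I_def by (rule inj_on_subset) auto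
    have imI: "(\<lambda>i. y ^ i) ` I = t" using tu(2) unfolding I_def S_def by auto
    define p where "p = (\<Sum>i\<in>I. monom (of_rat (u (y ^ i)) :: complex) i)"
    have "poly p y = (\<Sum>i\<in>I. of_rat (u (y ^ i)) * y ^ i)"
      by (simp add: p_def poly_sum poly_monom)
    also have "\<dots> = (\<Sum>v\<in>t. of_rat (u v) * v)"
      using sum.reindex[OF injI, of "\<lambda>v. of_rat (u v) * v"] imI by simp
    finally have p0: "poly p y = 0" using tu(3) by simp
    obtain v where v: "v \<in> t" "u v \<noteq> 0" using tu(4) by blast
    then obtain j where j: "j \<in> I" "v = y ^ j" using imI by blast
    have "coeff p j = (\<Sum>i\<in>I. if i = j then of_rat (u (y ^ i)) else 0)"
      by (simp add: p_def coeff_sum coeff_monom eq_commute)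
    also have "\<dots> = of_rat (u (y ^ j))" using j(1) by (simp add: I_def)
    finally have "coeff p j \<noteq> 0" using v j by simp
    then have "p \<noteq> 0" by auto
    moreover have "polyin \<rat> p" unfolding p_def using Q
      by (intro polyin_sum polyin_monom) auto
    ultimately show ?thesis using p0 unfolding algQ_def by blast
  qed
qed

lemma emb_hom: "\<sigma> \<in> embeddings K \<Longrightarrow> hom_on K \<sigma>"
  unfolding embeddings_def hom_on_def by blast
lemma emb_out: "\<sigma> \<in> embeddings K \<Longrightarrow> x \<notin> K \<Longrightarrow> \<sigma> x = 0"
  unfolding embeddings_def by blast

lemma finite_emb:
  assumes K: "number_field K"
  shows "finite (embeddings K)"
proof -
  have sf: "subfield_C K" and fd: "finite_degree_over_Q K" using K by (auto simp: number_field_def)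
  obtain B where B: "finite B" "B \<subseteq> K" "K \<subseteq> Qvs.span B"
     "\<forall>x\<in>K. \<exists>c :: complex \<Rightarrow> rat. x = (\<Sum>b\<in>B. of_rat (c b) * b)" by (rule span_K[OF fd])
  define P where "P b = (SOME p. polyin \<rat> p \<and> p \<noteq> 0 \<and> poly p b = 0)" for b
  have P: "polyin \<rat> (P b) \<and> P b \<noteq> 0 \<and> poly (P b) b = 0" if "b \<in> K" for b
    unfolding P_def using algQ_K[OF K that] unfolding algQ_def by (rule someI_ex)
  define R where "R b = {z. poly (P b) z = 0}" for b
  have "restrict \<sigma> B \<in> (\<Pi>\<^sub>E b\<in>B. R b)" if s: "\<sigma> \<in> embeddings K" for \<sigma>
  proof -
    have "\<sigma> b \<in> R b" if b: "b \<in> B" for b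
    proof -
      have bK: "b \<in> K" using b B by blast
      have "\<sigma> (poly (P b) b) = poly (map_poly \<sigma> (P b)) (\<sigma> b)"
        using hom_poly[OF emb_hom[OF s] sf _ bK] P[OF bK] sf_Rats[OF sf] polyin_mono by blast
      also have "\<dots> = poly (P b) (\<sigma> b)" using map_hom_Rats[OF emb_hom[OF s] sf] P[OF bK] by simp
      finally show ?thesis using P[OF bK] hom_0[OF emb_hom[OF s] sf_0[OF sf]] by (simp add: R_def)
    qed
    then show ?thesis by auto
  qed
  moreover have "inj_on (\<lambda>\<sigma>. restrict \<sigma> B) (embeddings K)"
  proof (rule inj_onI)
    fix \<sigma> \<tau> assume s: "\<sigma> \<in> embeddings K" "\<tau> \<in> embeddings K" "restrict \<sigma> B = restrict \<tau> B"
    then have eqB: "\<sigma> b = \<tau> b" if "b \<in> B" for b using that by (metis restrict_apply')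
    show "\<sigma> = \<tau>"
    proof
      fix x show "\<sigma> x = \<tau> x"
      proof (cases "x \<in> K")
        case False then show ?thesis using s emb_out by metis
      next
        case True
        then obtain c where c: "x = (\<Sum>b\<in>B. of_rat (c b) * b)" using B(4) by blast
        have mem: "of_rat (c b) * b \<in> K" if "b \<in> B" for b using that B(2) sf_mult[OF sf sf_of_rat[OF sf]] by blast
        have "\<rho> x = (\<Sum>b\<in>B. of_rat (c b) * \<rho> b)" if r: "\<rho> \<in> embeddings K" for \<rho>
        proof -
          have "\<rho> x = (\<Sum>b\<in>B. \<rho> (of_rat (c b) * b))" unfolding c by (rule hom_sum[OF emb_hom[OF r] sf]) (rule mem)
          also have "\<dots> = (\<Sum>b\<in>B. of_rat (c b) * \<rho> b)"
          proof (rule sum.cong)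
            fix b assume "b \<in> B"
            then have "b \<in> K" using B by blast
            then show "\<rho> (of_rat (c b) * b) = of_rat (c b) * \<rho> b"
              using hom_mult[OF emb_hom[OF r] sf_of_rat[OF sf] \<open>b \<in> K\<close>] hom_Rats[OF emb_hom[OF r] sf Rats_of_rat] by simp
          qed simp
          finally show ?thesis .
        qed
        then have "\<sigma> x = (\<Sum>b\<in>B. of_rat (c b) * \<sigma> b)" "\<tau> x = (\<Sum>b\<in>B. of_rat (c b) * \<tau> b)"
          using s(1,2) by blast+
        then show ?thesis using eqB by (simp cong: sum.cong)
      qed
    qed
  qed
  moreover have "finite (\<Pi>\<^sub>E b\<in>B. R b)"
  proof (intro finite_PiE)
    fix b assume "b \<in> B"
    then have "P b \<noteq> 0" using P B(2) by blast
    then show "finite (R b)" unfolding R_def by (rule poly_roots_finite)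
  qed (rule B(1))
  ultimately show ?thesis by (metis (no_types, lifting) image_subsetI inj_on_finite)
qed


lemma minpoly_deg:
  assumes m: "is_minpoly E b q"
  shows "degree q \<noteq> 0"
proof
  assume "degree q = 0"
  then obtain a where "q = [:a:]" by (rule degree_eq_zeroE)
  then show False using m by (simp add: is_minpoly_def)
qed

lemma iter_ext:
  assumes K: "number_field K"
  shows "set bs \<subseteq> K \<Longrightarrow> subfield_C E \<Longrightarrow> E \<subseteq> K \<Longrightarrow> hom_on E t \<Longrightarrow>
    \<exists>E' t'. subfield_C E' \<and> E \<subseteq> E' \<and> set bs \<subseteq> E' \<and> E' \<subseteq> K \<and> hom_on E' t' \<and> (\<forall>x\<in>E. t' x = t x)"
proof (induction bs arbitrary: E t)
  case Nil
  then show ?case by (intro exI[of _ E] exI[of _ t]) auto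
next
  case (Cons b bs)
  have sfK: "subfield_C K" using K by (simp add: number_field_def)
  have bK: "b \<in> K" using Cons.prems by simp
  obtain p where p: "polyin \<rat> p" "p \<noteq> 0" "poly p b = 0" using algQ_K[OF K bK] unfolding algQ_def by blast
  have "polyin E p" using p(1) sf_Rats[OF Cons.prems(2)] polyin_mono by blast
  then obtain q where q: "is_minpoly E b q" using ex_minpoly p by blast
  have "degree (map_poly t q) \<noteq> 0"
    using degree_map_hom[OF Cons.prems(4,2)] q minpoly_deg unfolding is_minpoly_def by metis
  then have "\<not> constant (poly (map_poly t q))" by (simp add: constant_degree)
  then obtain y where y: "poly (map_poly t q) y = 0" using fundamental_theorem_of_algebra by blast
  obtain t1 where t1: "hom_on (adjoin E b) t1" "\<forall>x\<in>E. t1 x = t x" "t1 b = y"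
    using extend[OF Cons.prems(2,4) q y] by blast
  have sub: "adjoin E b \<subseteq> K" using adjoin_subset[OF sfK Cons.prems(3) bK] .
  have sf1: "subfield_C (adjoin E b)"
    using adjoin_subfield[OF Cons.prems(2)] sub algQ_K[OF K] by blast
  have "set bs \<subseteq> K" using Cons.prems by simp
  then obtain E' t' where E': "subfield_C E'" "adjoin E b \<subseteq> E'" "set bs \<subseteq> E'" "E' \<subseteq> K"
     "hom_on E' t'" "\<forall>x\<in>adjoin E b. t' x = t1 x"
    using Cons.IH[OF _ sf1 sub t1(1)] by blast
  have "E \<subseteq> adjoin E b" using adjoin_base[OF Cons.prems(2)] by blast
  moreover have "b \<in> adjoin E b" using adjoin_gen[OF Cons.prems(2)] .
  ultimately show ?case using E' t1(2) by (intro exI[of _ E'] exI[of _ t']) auto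
qed

lemma nonfixed:
  assumes K: "number_field K" and x: "x \<in> K" "x \<notin> \<rat>"
  shows "\<exists>\<sigma>\<in>embeddings K. \<sigma> x \<noteq> x"
proof -
  have sfK: "subfield_C K" and fd: "finite_degree_over_Q K" using K by (auto simp: number_field_def)
  have Q: "subfield_C \<rat>" by (rule subfield_Rats)
  obtain p where p: "polyin \<rat> p" "p \<noteq> 0" "poly p x = 0" using algQ_K[OF K x(1)] unfolding algQ_def by blast
  then obtain q where q: "is_minpoly \<rat> x q" using ex_minpoly by blast
  have qQ: "polyin \<rat> q" "q \<noteq> 0" "poly q x = 0" using q by (auto simp: is_minpoly_def)
  have d0: "degree q \<noteq> 0" using minpoly_deg[OF q] .
  have d1: "degree q \<noteq> 1"
  proof
    assume d: "degree q = 1"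
    obtain a q1 where aq: "q = pCons a q1" by (cases q)
    have "q1 \<noteq> 0" using d aq by auto
    then have "degree q1 = 0" using d aq degree_pCons_eq by fastforce
    then obtain c where c: "q1 = [:c:]" by (rule degree_eq_zeroE)
    have c0: "c \<noteq> 0" using \<open>q1 \<noteq> 0\<close> c by simp
    have ac: "a \<in> \<rat>" "c \<in> \<rat>" using qQ(1) aq c Q by (auto simp: polyin_pCons)
    have "a + x * c = 0" using qQ(3) aq c by simp
    then have "x = - a / c" using c0 by (simp add: field_simps add_eq_0_iff)
    then show False using ac x(2) by simp
  qed
  have dq: "polyin \<rat> (pderiv q)" using polyin_pderiv[OF Q qQ(1)] .
  have dq0: "pderiv q \<noteq> 0" using d0 by (simp add: pderiv_eq_0_iff)
  have "degree (pderiv q) < degree q" using d0 degree_pderiv[of q] by simp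
  then have dqx: "poly (pderiv q) x \<noteq> 0" using q dq dq0 unfolding is_minpoly_def by force
  obtain h where h: "q = [:-x, 1:] * h" using qQ(3) poly_eq_0_iff_dvd by (metis dvdE)
  have "pderiv q = [:-x, 1:] * pderiv h + h * pderiv [:-x, 1:]" unfolding h by (rule pderiv_mult)
  then have "poly (pderiv q) x = poly h x" by (simp add: pderiv_pCons)
  then have hx: "poly h x \<noteq> 0" using dqx by simp
  have h0: "h \<noteq> 0" using h qQ(2) by auto
  have "degree q = Suc (degree h)" unfolding h using h0 degree_mult_eq[of "[:-x, 1:]" h] by simp
  then have "degree h \<noteq> 0" using d1 by simp
  then have "\<not> constant (poly h)" by (simp add: constant_degree)
  then obtain y where y: "poly h y = 0" using fundamental_theorem_of_algebra by blast
  have yx: "y \<noteq> x" using y hx by blast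
  have qy: "poly (map_poly (\<lambda>z. z) q) y = 0" using y h by simp
  have hid: "hom_on \<rat> (\<lambda>z. z)" by (simp add: hom_on_def)
  obtain t1 where t1: "hom_on (adjoin \<rat> x) t1" "t1 x = y"
    using extend[OF Q hid q qy] by blast
  have sub: "adjoin \<rat> x \<subseteq> K" using adjoin_subset[OF sfK sf_Rats[OF sfK] x(1)] .
  have sf1: "subfield_C (adjoin \<rat> x)"
    using adjoin_subfield[OF Q] sub algQ_K[OF K] by blast
  obtain B where B: "finite B" "B \<subseteq> K" "K \<subseteq> Qvs.span B"
     "\<forall>x\<in>K. \<exists>c :: complex \<Rightarrow> rat. x = (\<Sum>b\<in>B. of_rat (c b) * b)" by (rule span_K[OF fd])
  obtain bs where bs: "set bs = B" using finite_list[OF B(1)] by blast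
  obtain E' t' where E': "subfield_C E'" "adjoin \<rat> x \<subseteq> E'" "set bs \<subseteq> E'" "E' \<subseteq> K"
     "hom_on E' t'" "\<forall>z\<in>adjoin \<rat> x. t' z = t1 z"
    using iter_ext[OF K _ sf1 sub t1(1)] bs B(2) by blast
  have "K \<subseteq> E'"
  proof
    fix z assume "z \<in> K"
    then obtain c where c: "z = (\<Sum>b\<in>B. of_rat (c b) * b)" using B(4) by blast
    have "of_rat (c b) * b \<in> E'" if "b \<in> B" for b
      using that bs E'(3) sf_mult[OF E'(1) sf_of_rat[OF E'(1)]] by blast
    then show "z \<in> E'" unfolding c by (rule sf_sum[OF E'(1)])
  qed
  then have EK: "E' = K" using E'(4) by blast
  define \<sigma> where "\<sigma> z = (if z \<in> K then t' z else 0)" for z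
  have "\<sigma> \<in> embeddings K"
    using E'(5) EK sfK unfolding embeddings_def hom_on_def \<sigma>_def by (auto simp: sf_add sf_mult sf_1)
  moreover have "\<sigma> x = y" using x(1) t1(2) E'(6) adjoin_gen[OF Q] by (simp add: \<sigma>_def)
  ultimately show ?thesis using yx by blast
qed


lemma of_rat_complex_real: "(of_rat r :: complex) = complex_of_real (of_rat r)"
proof -
  obtain a b where ab: "quotient_of r = (a, b)" by force
  have r: "r = of_int a / of_int b" using quotient_of_div[OF ab] .
  show ?thesis unfolding r by (simp add: of_rat_divide)
qed

lemma pair_prod:
  fixes f :: "'a \<Rightarrow> complex"
  assumes "finite G"
  shows "(\<forall>\<sigma>\<in>G. \<psi> \<sigma> \<in> G \<and> \<psi> (\<psi> \<sigma>) = \<sigma> \<and> \<psi> \<sigma> \<noteq> \<sigma> \<and> f (\<psi> \<sigma>) = cnj (f \<sigma>)) \<Longrightarrow>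
    \<exists>t\<ge>0. prod f G = complex_of_real t"
  using assms
proof (induction G rule: finite_psubset_induct)
  case (psubset G)
  show ?case
  proof (cases "G = {}")
    case True then show ?thesis by (intro exI[of _ 1]) auto
  next
    case False
    then obtain \<sigma> where s: "\<sigma> \<in> G" by blast
    define G' where "G' = G - {\<sigma>, \<psi> \<sigma>}"
    have ps: "\<psi> \<sigma> \<in> G" "\<psi> \<sigma> \<noteq> \<sigma>" "f (\<psi> \<sigma>) = cnj (f \<sigma>)" using psubset.prems s by auto
    have "G' \<subset> G" using s unfolding G'_def by blast
    moreover have "\<forall>\<rho>\<in>G'. \<psi> \<rho> \<in> G' \<and> \<psi> (\<psi> \<rho>) = \<rho> \<and> \<psi> \<rho> \<noteq> \<rho> \<and> f (\<psi> \<rho>) = cnj (f \<rho>)"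
    proof
      fix \<rho> assume r: "\<rho> \<in> G'"
      then have rG: "\<rho> \<in> G" "\<rho> \<noteq> \<sigma>" "\<rho> \<noteq> \<psi> \<sigma>" unfolding G'_def by auto
      have "\<psi> \<rho> \<noteq> \<sigma>" using rG psubset.prems by metis
      moreover have "\<psi> \<rho> \<noteq> \<psi> \<sigma>" using rG psubset.prems s by metis
      ultimately show "\<psi> \<rho> \<in> G' \<and> \<psi> (\<psi> \<rho>) = \<rho> \<and> \<psi> \<rho> \<noteq> \<rho> \<and> f (\<psi> \<rho>) = cnj (f \<rho>)"
        using rG psubset.prems unfolding G'_def by auto
    qed
    ultimately obtain t where t: "t \<ge> 0" "prod f G' = complex_of_real t" using psubset.IH by blast
    have "prod f G = f \<sigma> * prod f (G - {\<sigma>})" using prod.remove[OF psubset.hyps s] .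
    also have "prod f (G - {\<sigma>}) = f (\<psi> \<sigma>) * prod f G'"
      using prod.remove[of "G - {\<sigma>}" "\<psi> \<sigma>" f] psubset.hyps ps unfolding G'_def
      by (simp add: insert_commute Diff_insert2[symmetric])
    finally have "prod f G = (f \<sigma> * cnj (f \<sigma>)) * complex_of_real t" using t ps by (simp add: mult.assoc)
    also have "\<dots> = complex_of_real (((Re (f \<sigma>))\<^sup>2 + (Im (f \<sigma>))\<^sup>2) * t)"
      by (simp add: complex_mult_cnj)
    finally show ?thesis using t by (intro exI[of _ "((Re (f \<sigma>))\<^sup>2 + (Im (f \<sigma>))\<^sup>2) * t"]) auto
  qed
qed

lemma idK_emb: "subfield_C K \<Longrightarrow> (\<lambda>z. if z \<in> K then z else 0) \<in> embeddings K"
  unfolding embeddings_def by (auto simp: sf_add sf_mult sf_1)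

lemma norm_rat:
  assumes K: "number_field K" and gal: "galois_over_Q K" and ti: "totally_imaginary K"
    and a: "a \<in> K"
  shows "\<exists>r\<ge>0. field_norm_Q K a = of_rat r"
proof -
  have sfK: "subfield_C K" using K by (simp add: number_field_def)
  define G where "G = embeddings K"
  have fG: "finite G" unfolding G_def using finite_emb[OF K] .
  have inK: "\<sigma> a \<in> K" if "\<sigma> \<in> G" for \<sigma>
  proof -
    have "\<sigma> ` K \<subseteq> K" using gal that unfolding galois_over_Q_def G_def by blast
    then show ?thesis using a by blast
  qed
  have NK: "field_norm_Q K a \<in> K" unfolding field_norm_Q_def G_def[symmetric] by (rule sf_prod[OF sfK]) (rule inK)
  have fixN: "\<tau> (field_norm_Q K a) = field_norm_Q K a" if tG: "\<tau> \<in> G" for \<tau>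
  proof -
    have ht: "hom_on K \<tau>" using emb_hom tG G_def by blast
    define \<phi> where "\<phi> \<sigma> = (\<lambda>z. \<tau> (\<sigma> z))" for \<sigma> :: "complex \<Rightarrow> complex"
    have phiG: "\<phi> \<sigma> \<in> G" if sG: "\<sigma> \<in> G" for \<sigma>
    proof -
      have hs: "hom_on K \<sigma>" using emb_hom sG G_def by blast
      have sK: "\<sigma> z \<in> K" if "z \<in> K" for z using gal sG that unfolding galois_over_Q_def G_def by blast
      show ?thesis unfolding G_def embeddings_def \<phi>_def
      proof (intro CollectI conjI ballI allI impI)
        fix x y assume xy: "x \<in> K" "y \<in> K"
        show "\<tau> (\<sigma> (x + y)) = \<tau> (\<sigma> x) + \<tau> (\<sigma> y)"
          using hom_add[OF hs xy] hom_add[OF ht sK[OF xy(1)] sK[OF xy(2)]] by simp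
        show "\<tau> (\<sigma> (x * y)) = \<tau> (\<sigma> x) * \<tau> (\<sigma> y)"
          using hom_mult[OF hs xy] hom_mult[OF ht sK[OF xy(1)] sK[OF xy(2)]] by simp
      next
        show "\<tau> (\<sigma> 1) = 1" using hom_1[OF hs] hom_1[OF ht] by simp
      next
        fix x assume "x \<notin> K"
        then show "\<tau> (\<sigma> x) = 0" using emb_out sG G_def hom_0[OF ht sf_0[OF sfK]] by metis
      qed
    qed
    have inj: "inj_on \<phi> G"
    proof (rule inj_onI)
      fix \<sigma> \<rho> assume sr: "\<sigma> \<in> G" "\<rho> \<in> G" "\<phi> \<sigma> = \<phi> \<rho>"
      show "\<sigma> = \<rho>"
      proof
        fix z show "\<sigma> z = \<rho> z"
        proof (cases "z \<in> K")
          case True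
          have "\<tau> (\<sigma> z) = \<tau> (\<rho> z)" using sr(3) unfolding \<phi>_def by metis
          moreover have "\<sigma> z \<in> K" "\<rho> z \<in> K" using gal sr True unfolding galois_over_Q_def G_def by blast+
          ultimately show ?thesis using hom_inj[OF ht sfK] by blast
        next
          case False then show ?thesis using emb_out sr G_def by metis
        qed
      qed
    qed
    have img: "\<phi> ` G = G" using endo_inj_surj[OF fG _ inj] phiG by blast
    have "\<tau> (field_norm_Q K a) = (\<Prod>\<sigma>\<in>G. \<tau> (\<sigma> a))"
      unfolding field_norm_Q_def G_def[symmetric] by (rule hom_prod[OF ht sfK]) (rule inK)
    also have "\<dots> = (\<Prod>\<sigma>\<in>G. (\<phi> \<sigma>) a)" by (simp add: \<phi>_def)
    also have "\<dots> = (\<Prod>\<rho>\<in>\<phi> ` G. \<rho> a)" using prod.reindex[OF inj, of "\<lambda>\<rho>. \<rho> a"] by simp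
    also have "\<dots> = (\<Prod>\<rho>\<in>G. \<rho> a)" using img by simp
    also have "\<dots> = field_norm_Q K a" by (simp add: field_norm_Q_def G_def)
    finally show ?thesis .
  qed
  have "field_norm_Q K a \<in> \<rat>"
    using nonfixed[OF K NK] fixN G_def by blast
  then obtain r where r: "field_norm_Q K a = of_rat r" by (auto elim: Rats_cases)
  define \<psi> where "\<psi> \<sigma> = (\<lambda>z. cnj (\<sigma> z))" for \<sigma> :: "complex \<Rightarrow> complex"
  have "\<forall>\<sigma>\<in>G. \<psi> \<sigma> \<in> G \<and> \<psi> (\<psi> \<sigma>) = \<sigma> \<and> \<psi> \<sigma> \<noteq> \<sigma> \<and> (\<psi> \<sigma>) a = cnj (\<sigma> a)"
  proof
    fix \<sigma> assume sG: "\<sigma> \<in> G"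
    have hs: "hom_on K \<sigma>" using emb_hom sG G_def by blast
    have "\<psi> \<sigma> \<in> G" unfolding G_def embeddings_def \<psi>_def
      using hs emb_out[of \<sigma> K] sG G_def hom_add[OF hs] hom_mult[OF hs] hom_1[OF hs] by auto
    moreover have "\<psi> \<sigma> \<noteq> \<sigma>"
    proof
      assume eq: "\<psi> \<sigma> = \<sigma>"
      have "\<sigma> ` K \<subseteq> \<real>"
      proof
        fix w assume "w \<in> \<sigma> ` K"
        then obtain z where "w = \<sigma> z" by blast
        then have "cnj w = w" using eq unfolding \<psi>_def by metis
        then show "w \<in> \<real>" using Reals_cnj_iff by blast
      qed
      then show False using ti sG unfolding totally_imaginary_def G_def by blast
    qed
    ultimately show "\<psi> \<sigma> \<in> G \<and> \<psi> (\<psi> \<sigma>) = \<sigma> \<and> \<psi> \<sigma> \<noteq> \<sigma> \<and> (\<psi> \<sigma>) a = cnj (\<sigma> a)"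
      by (simp add: \<psi>_def)
  qed
  then obtain t where t: "t \<ge> 0" "(\<Prod>\<sigma>\<in>G. \<sigma> a) = complex_of_real t"
    using pair_prod[OF fG, of \<psi> "\<lambda>\<sigma>. \<sigma> a"] by blast
  have "complex_of_real (of_rat r) = complex_of_real t"
    using t(2) r of_rat_complex_real unfolding field_norm_Q_def G_def by metis
  then have "of_rat r = t" using of_real_eq_iff by blast
  then have "(0::real) \<le> of_rat r" using t(1) by simp
  then have "r \<ge> 0" using zero_le_of_rat_iff by blast
  then show ?thesis using r by blast
qed

theorem mainTheorem9:
  fixes K :: "complex set"
  assumes "number_field K"
    and "galois_over_Q K"
    and "totally_imaginary K"
  shows "sums_of_norms K = of_rat ` {q :: rat. q \<ge> 0}"
proof
  show "sums_of_norms K \<subseteq> of_rat ` {q :: rat. q \<ge> 0}"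
  proof
    fix z assume "z \<in> sums_of_norms K"
    then obtain as where as: "set as \<subseteq> K" "z = sum_list (map (field_norm_Q K) as)"
      unfolding sums_of_norms_def by blast
    have "set as \<subseteq> K \<Longrightarrow> \<exists>r\<ge>0. sum_list (map (field_norm_Q K) as) = of_rat r"
    proof (induction as)
      case Nil then show ?case by (intro exI[of _ 0]) auto
    next
      case (Cons a as)
      obtain r1 where r1: "r1 \<ge> 0" "field_norm_Q K a = of_rat r1"
        using norm_rat[OF assms] Cons.prems by auto
      obtain r2 where r2: "r2 \<ge> 0" "sum_list (map (field_norm_Q K) as) = of_rat r2"
        using Cons by auto
      show ?case using r1 r2 by (intro exI[of _ "r1 + r2"]) (auto simp: of_rat_add)
    qed
    then show "z \<in> of_rat ` {q :: rat. q \<ge> 0}" using as by auto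
  qed
next
  show "of_rat ` {q :: rat. q \<ge> 0} \<subseteq> sums_of_norms K"
  proof
    fix z :: complex assume "z \<in> of_rat ` {q :: rat. q \<ge> 0}"
    then obtain q where q: "q \<ge> 0" "z = of_rat q" by blast
    have sfK: "subfield_C K" using assms(1) by (simp add: number_field_def)
    define G where "G = embeddings K"
    have fG: "finite G" unfolding G_def using finite_emb[OF assms(1)] .
    have "G \<noteq> {}" using idK_emb[OF sfK] G_def by blast
    then obtain k where k: "card G = Suc k" using fG by (metis card_0_eq not0_implies_Suc)
    obtain a b where ab: "quotient_of q = (a, b)" by force
    have b0: "b > 0" using quotient_of_denom_pos[OF ab] .
    have qab: "q = of_int a / of_int b" using quotient_of_div[OF ab] .
    have a0: "a \<ge> 0" using q(1) b0 qab by (simp add: zero_le_divide_iff)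
    define c :: rat where "c = 1 / of_int b"
    have Nc: "field_norm_Q K (of_rat c) = of_rat c ^ Suc k"
    proof -
      have "field_norm_Q K (of_rat c) = (\<Prod>\<sigma>\<in>G. of_rat c)"
        unfolding field_norm_Q_def G_def[symmetric]
        by (rule prod.cong) (use emb_hom hom_Rats[OF _ sfK] Rats_of_rat G_def in auto)
      then show ?thesis using k by simp
    qed
    define m where "m = nat a * nat b ^ k"
    have "rat_of_nat m * c ^ Suc k = q"
      using a0 b0 unfolding m_def c_def qab by (simp add: field_simps power_divide)
    then have "z = of_nat m * field_norm_Q K (of_rat c)"
      using q(2) Nc by (metis of_rat_mult of_rat_of_nat_eq of_rat_power)
    also have "\<dots> = sum_list (map (field_norm_Q K) (replicate m (of_rat c)))"
      by (simp add: sum_list_replicate)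
    finally show "z \<in> sums_of_norms K"
      unfolding sums_of_norms_def using sf_of_rat[OF sfK] by fastforce
  qed
qed

end
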